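(* With the notation in the context, the following identity of linear endomorphisms of $\mathbb C^{\mathcal L(\Omega)}$ holds: $(q^2-1)\big(L_1(x_0)R_1(x_0)-R_1(x_0)L_1(x_0)\big)=q^DD_1(x_0)D_2(x_0)-(q^2-1)D_3(x_0)-D_4(x_0)$.
   Context: $\Omega$ is a $D$-dimensional vector space over a finite field $\mathbb F$ and $q=\sqrt{|\mathbb F|}$. $\mathcal L(\Omega)$ is the set of subspaces of $\Omega$ and $\mathbb C^{\mathcal L(\Omega)}$ the complex vector space with basis $\mathcal L(\Omega)$; $x'\subset\mathrel{\cdot} x$ means $x'\subseteq x$ with $\dim x'=\dim x-1$; $|y|$ denotes the cardinality of a subspace $y$ (so $|y|=q^{2\dim y}$). Fix subspaces $x_0,x_1$ with $\Omega=x_0\oplus x_1$; for $u\in\Omega$ write $u=u_0+u_1$ with $u_0\in x_0$, $u_1\in x_1$. For $x\in\mathcal L(\Omega)$ let $\tau(x):(x+x_0)/x_0\to x_0/(x\cap x_0)$ be the linear map $u+x_0\mapsto u_0+(x\cap x_0)$ ($u\in x$). Linear maps on $\mathbb C^{\mathcal L(\Omega)}$ are defined on the basis by: $L_1(x_0)x=\sum x'$ over $x'\subset\mathrel{\cdot} x$ with $x'\cap x_0=x\cap x_0$; $L_2(x_0)x=\sum x'$ over $x'\subset\mathrel{\cdot} x$ with $x'+x_0=x+x_0$; $R_1(x_0)x=\sum x'$ over $x\subset\mathrel{\cdot} x'$ with $x'\cap x_0=x\cap x_0$; $R_2(x_0)x=\sum x'$ over $x\subset\mathrel{\cdot} x'$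 with $x'+x_0=x+x_0$; $D_1(x_0)x=q^{\dim(\Omega/x_0)-2\dim((x+x_0)/x_0)}x$; $D_2(x_0)x=q^{\dim x_0-2\dim(x\cap x_0)}x$; $D_3(x_0)x=\sum x'$ over $x'\in\mathcal L(\Omega)$ with $x'+x_0=x+x_0$, $x'\cap x_0=x\cap x_0$ and $\operatorname{rank}(\tau(x')-\tau(x))=1$; $D_4(x_0)x=\big(\frac{|x|+|x_0|}{|x\cap x_0|}-1\big)x$. *)

theory Defs
  imports "HOL-Analysis.Analysis"
begin

text \<open>Omega is the D-dimensional space 'a^'n over the finite field 'a, D = CARD('n).
 A linear endomorphism A of C^{L(Omega)} is represented by its matrix coefficients:
 A x y = coefficient of the basis vector y in A(x).\<close>

type_synonym ('a,'n) lop = "('a^'n) set \<Rightarrow> ('a^'n) set \<Rightarrow> complex"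

definition Lsp :: "('a::field ^ 'n) set set" where
  "Lsp = {x. vec.subspace x}"

definition qF :: "'a::{field,finite} itself \<Rightarrow> real" where
  "qF _ = sqrt (real CARD('a))"

definition ssum :: "('a::field ^ 'n) set \<Rightarrow> ('a ^ 'n) set \<Rightarrow> ('a ^ 'n) set" where
  "ssum A B = {a + b | a b. a \<in> A \<and> b \<in> B}"

definition covered :: "('a::field ^ 'n) set \<Rightarrow> ('a ^ 'n) set \<Rightarrow> bool" where
  "covered x' x \<longleftrightarrow> vec.subspace x' \<and> vec.subspace x \<and> x' \<subseteq> x \<and> vec.dim x' + 1 = vec.dim x"

definition opcomp :: "('a::{field,finite},'n::finite) lop \<Rightarrow> ('a,'n) lop \<Rightarrow> ('a,'n) lop" where
  "opcomp A B x z = (\<Sum>y\<in>Lsp. B x y * A y z)"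

definition L1 :: "('a::{field,finite} ^ 'n::finite) set \<Rightarrow> ('a,'n) lop" where
  "L1 x0 x x' = (if covered x' x \<and> x' \<inter> x0 = x \<inter> x0 then 1 else 0)"

definition R1 :: "('a::{field,finite} ^ 'n::finite) set \<Rightarrow> ('a,'n) lop" where
  "R1 x0 x x' = (if covered x x' \<and> x' \<inter> x0 = x \<inter> x0 then 1 else 0)"

definition D1 :: "('a::{field,finite} ^ 'n::finite) set \<Rightarrow> ('a,'n) lop" where
  "D1 x0 x y = (if y = x then complex_of_real (qF TYPE('a) powr
      (real (CARD('n) - vec.dim x0) - 2 * (real (vec.dim (ssum x x0)) - real (vec.dim x0)))) else 0)"

definition D2 :: "('a::{field,finite} ^ 'n::finite) set \<Rightarrow> ('a,'n) lop" where
  "D2 x0 x y = (if y = x then complex_of_real (qF TYPE('a) powr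
      (real (vec.dim x0) - 2 * real (vec.dim (x \<inter> x0)))) else 0)"

definition D4 :: "('a::{field,finite} ^ 'n::finite) set \<Rightarrow> ('a,'n) lop" where
  "D4 x0 x y = (if y = x then
      complex_of_real ((real (card x) + real (card x0)) / real (card (x \<inter> x0)) - 1) else 0)"

text \<open>cosets, the x0-component of a vector w.r.t. Omega = x0 (+) x1, and the map tau(x)
  from (x+x0)/x0 to x0/(x cap x0), acting on cosets (as sets)\<close>
definition coset :: "('a::field ^ 'n) \<Rightarrow> ('a ^ 'n) set \<Rightarrow> ('a ^ 'n) set" where
  "coset u W = (\<lambda>w. u + w) ` W"

definition proj0 :: "('a::field ^ 'n) set \<Rightarrow> ('a ^ 'n) set \<Rightarrow> 'a ^ 'n \<Rightarrow> 'a ^ 'n" where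
  "proj0 x0 x1 u = (THE a. a \<in> x0 \<and> u - a \<in> x1)"

definition tau :: "('a::field ^ 'n) set \<Rightarrow> ('a ^ 'n) set \<Rightarrow> ('a ^ 'n) set \<Rightarrow> ('a ^ 'n) set \<Rightarrow> ('a ^ 'n) set" where
  "tau x0 x1 x C = coset (proj0 x0 x1 (SOME u. u \<in> x \<and> coset u x0 = C)) (x \<inter> x0)"

text \<open>rank of tau(x') - tau(x) (x, x' with equal x+x0 and equal x cap x0): the image is a
 subspace of x0/W, W = x cap x0; its dimension is dim(union of the image cosets) - dim W\<close>
definition tau_diff_rank :: "('a::field ^ 'n) set \<Rightarrow> ('a ^ 'n) set \<Rightarrow> ('a ^ 'n) set \<Rightarrow> ('a ^ 'n) set \<Rightarrow> nat" where
  "tau_diff_rank x0 x1 x' x =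
     (let dom = {coset u x0 | u. u \<in> x};
          dif = (\<lambda>C. {a - b | a b. a \<in> tau x0 x1 x' C \<and> b \<in> tau x0 x1 x C})
      in vec.dim (\<Union> (dif ` dom)) - vec.dim (x \<inter> x0))"

definition D3 :: "('a::{field,finite} ^ 'n::finite) set \<Rightarrow> ('a ^ 'n) set \<Rightarrow> ('a,'n) lop" where
  "D3 x0 x1 x x' = (if vec.subspace x' \<and> ssum x' x0 = ssum x x0 \<and> x' \<inter> x0 = x \<inter> x0
        \<and> tau_diff_rank x0 x1 x' x = 1 then 1 else 0)"

end

theory Submission
  imports Defs
begin


lemma card_subspace:
  fixes V :: "('a::{field,finite} ^ 'n::finite) set"
  assumes "vec.subspace V"
  shows "card V = CARD('a) ^ vec.dim V"
proof -
  obtain B where B: "B \<subseteq> V" "vec.independent B" "V \<subseteq> vec.span B" "card B = vec.dim V"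
    using vec.basis_exists by blast
  have fB: "finite B" by simp
  have spanB: "vec.span B = V"
    using B assms by (simp add: vec.span_subspace)
  let ?f = "\<lambda>c. \<Sum>v\<in>B. c v *s v"
  have inj: "inj_on ?f (B \<rightarrow>\<^sub>E UNIV)"
  proof (rule inj_onI)
    fix c d assume c: "c \<in> B \<rightarrow>\<^sub>E UNIV" and d: "d \<in> B \<rightarrow>\<^sub>E UNIV" and eq: "?f c = ?f d"
    have "(\<Sum>v\<in>B. (c v - d v) *s v) = 0"
      using eq by (simp add: vector_space_over_itself.scale_left_diff_distrib sum_subtractf scaleR_left_diff_distrib vec.scale_left_diff_distrib)
    then have "\<forall>v\<in>B. c v - d v = 0"
    proof -
      have "\<forall>c. (\<Sum>v\<in>B. c v *s v) = 0 \<longrightarrow> (\<forall>v\<in>B. c v = 0)"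
        using B(2) unfolding vec.independent_explicit by blast
      from this[rule_format, of "\<lambda>v. c v - d v"] show ?thesis using \<open>(\<Sum>v\<in>B. (c v - d v) *s v) = 0\<close> by blast
    qed
    then show "c = d" using c d by (intro extensionalityI[of _ B]) (auto simp: PiE_def)
  qed
  have img: "?f ` (B \<rightarrow>\<^sub>E UNIV) = V"
  proof -
    have "vec.span B = range ?f" using vec.span_finite[OF fB] .
    moreover have "range ?f = ?f ` (B \<rightarrow>\<^sub>E UNIV)"
    proof
      show "range ?f \<subseteq> ?f ` (B \<rightarrow>\<^sub>E UNIV)"
      proof
        fix y assume "y \<in> range ?f"
        then obtain c where y: "y = ?f c" by auto
        have "y = ?f (restrict c B)" using y by (auto intro: sum.cong)
        moreover have "restrict c B \<in> B \<rightarrow>\<^sub>E UNIV" by auto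
        ultimately show "y \<in> ?f ` (B \<rightarrow>\<^sub>E UNIV)" by (rule image_eqI)
      qed
    qed auto
    ultimately show ?thesis using spanB by simp
  qed
  have "card V = card (B \<rightarrow>\<^sub>E (UNIV::'a set))"
    using card_image[OF inj] img by simp
  also have "\<dots> = CARD('a) ^ card B" by (simp add: card_PiE)
  finally show ?thesis using B(4) by simp
qed



definition dotp :: "'a::field ^ 'n::finite \<Rightarrow> 'a ^ 'n \<Rightarrow> 'a" where
  "dotp u v = (\<Sum>i\<in>UNIV. u$i * v$i)"

definition perp :: "('a::field ^ 'n::finite) set \<Rightarrow> ('a ^ 'n) set" where
  "perp V = {u. \<forall>v\<in>V. dotp v u = 0}"

definition zpat :: "'n set \<Rightarrow> ('a::zero ^ 'n) set" where
  "zpat J = {w. \<forall>i\<in>J. w$i = 0}"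

lemma dotp_add_left: "dotp (v + w) u = dotp v u + dotp w u"
  by (simp add: dotp_def sum.distrib distrib_right)
lemma dotp_scale_left: "dotp (c *s v) u = c * dotp v u"
  by (simp add: dotp_def sum_distrib_left mult.assoc)
lemma dotp_comm: "dotp v u = dotp u v"
  by (simp add: dotp_def mult.commute)
lemma dotp_axis: "dotp (axis j 1) u = u $ j"
proof -
  have "dotp (axis j 1) u = (\<Sum>i\<in>UNIV. if i = j then u$i else 0)"
    unfolding dotp_def by (rule sum.cong) (auto simp: axis_def)
  then show ?thesis by simp
qed
lemma dotp_zero_left[simp]: "dotp 0 u = 0" by (simp add: dotp_def)
lemma dotp_zero_right[simp]: "dotp u 0 = 0" by (simp add: dotp_def)
lemma dotp_diff_right: "dotp v (u - w) = dotp v u - dotp v w"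
  by (simp add: dotp_def sum_subtractf right_diff_distrib)

lemma subspace_dotp0: "vec.subspace {v. dotp v u = 0}"
  unfolding vec.subspace_def by (auto simp: dotp_add_left dotp_scale_left)

lemma subspace_perp: "vec.subspace (perp V)"
  unfolding vec.subspace_def perp_def
  by (auto simp: dotp_comm[of _ "_ + _"] dotp_comm[of _ "_ *s _"] dotp_add_left dotp_scale_left)
     (auto simp: dotp_comm)

lemma card_zpat:
  "card (zpat J :: ('a::{zero,finite} ^ 'n::finite) set) = CARD('a) ^ (CARD('n) - card J)"
proof -
  let ?f = "\<lambda>w::'a^'n. restrict (($) w) (- J)"
  have inj: "inj_on ?f (zpat J)"
  proof (rule inj_onI)
    fix v w assume v: "v \<in> zpat J" and w: "w \<in> zpat J" and eq: "?f v = ?f w"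
    show "v = w"
    proof (subst vec_eq_iff, intro allI)
      fix i show "v $ i = w $ i"
      proof (cases "i \<in> J")
        case True then show ?thesis using v w by (simp add: zpat_def)
      next
        case False then show ?thesis using fun_cong[OF eq, of i] by simp
      qed
    qed
  qed
  have img: "?f ` zpat J = (- J) \<rightarrow>\<^sub>E (UNIV::'a set)"
  proof
    show "(- J) \<rightarrow>\<^sub>E UNIV \<subseteq> ?f ` zpat J"
    proof
      fix g assume g: "g \<in> (- J) \<rightarrow>\<^sub>E (UNIV::'a set)"
      let ?w = "(\<chi> i. if i \<in> J then 0 else g i) :: 'a^'n"
      have h1: "?w \<in> zpat J" by (simp add: zpat_def)
      have h2: "?f ?w = g"
      proof
        fix i show "?f ?w i = g i"
        proof (cases "i \<in> J")
          case True
          then show ?thesis using PiE_arb[OF g, of i] by (simp add: restrict_def)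
        next
          case False
          then show ?thesis by (simp add: restrict_def)
        qed
      qed
      show "g \<in> ?f ` zpat J" by (rule image_eqI[where f="?f" and x="?w" and A="zpat J", OF h2[symmetric] h1])
    qed
  qed auto
  have "card (zpat J :: ('a ^ 'n) set) = card ((- J) \<rightarrow>\<^sub>E (UNIV::'a set))"
    using card_image[OF inj] img by simp
  also have "\<dots> = CARD('a) ^ card (- J)" by (simp add: card_PiE)
  also have "card (- J) = CARD('n) - card J"
    by (simp add: Compl_eq_Diff_UNIV card_Diff_subset)
  finally show ?thesis .
qed

lemma frame:
  fixes V :: "('a::{field,finite} ^ 'n::finite) set"
  assumes "vec.subspace V"
  obtains \<beta> :: "'n \<Rightarrow> 'a^'n" and I where "inj \<beta>" "vec.independent (range \<beta>)"
    "card I = vec.dim V" "vec.span (\<beta> ` I) = V"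
proof -
  obtain B where B: "B \<subseteq> V" "vec.independent B" "V \<subseteq> vec.span B" "card B = vec.dim V"
    by (rule vec.basis_exists)
  obtain B' where B': "B \<subseteq> B'" "vec.independent B'" "UNIV \<subseteq> vec.span B'"
    using B(2) by (rule vec.maximal_independent_subset_extend[of B UNIV, rotated]) auto
  have "card B' = vec.dim (UNIV :: ('a^'n) set)"
    using B' by (intro vec.basis_card_eq_dim) auto
  then have cB': "card B' = CARD('n)" by (simp add: card_cart_basis)
  obtain \<beta> where bij: "bij_betw \<beta> (UNIV::'n set) B'"
    using finite_same_card_bij[of "UNIV::'n set" B'] cB' by auto
  let ?I = "\<beta> -` B"
  have inj: "inj \<beta>" using bij by (simp add: bij_betw_def)
  have rng: "range \<beta> = B'" using bij by (simp add: bij_betw_def)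
  have img: "\<beta> ` ?I = B" using rng B'(1) by auto
  have "card ?I = card B"
    using card_image[OF inj_on_subset[OF inj, of ?I]] img by simp
  moreover have "vec.span B = V" using B assms by (simp add: vec.span_subspace)
  ultimately show ?thesis using that[of \<beta> ?I] inj rng B' B(4) img by simp
qed

lemma card_gt1: "1 < CARD('a::{field,finite})"
proof -
  have "{0::'a, 1} \<subseteq> UNIV" by simp
  then have "card {0::'a,1} \<le> CARD('a)" by (intro card_mono) simp_all
  then show ?thesis by simp
qed

lemma perp_card:
  fixes V :: "('a::{field,finite} ^ 'n::finite) set"
  assumes "vec.subspace V"
  shows "card (perp V) = CARD('a) ^ (CARD('n) - vec.dim V)"
proof -
  obtain \<beta> :: "'n \<Rightarrow> 'a^'n" and I where b: "inj \<beta>" "vec.independent (range \<beta>)"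
    "card I = vec.dim V" "vec.span (\<beta> ` I) = V"
    using frame[OF assms] by metis
  define g where "g c = (\<Sum>i\<in>UNIV. c$i *s \<beta> i)" for c :: "'a^'n"
  define m where "m u = (\<chi> i. dotp (\<beta> i) u)" for u :: "'a^'n"
  have ginj: "inj g"
  proof (rule injI)
    fix c d assume eq: "g c = g d"
    have "(\<Sum>i\<in>UNIV. (c$i - d$i) *s \<beta> i) = 0"
      using eq by (simp add: g_def vec.scale_left_diff_distrib sum_subtractf)
    then have "(\<Sum>v\<in>range \<beta>. (\<lambda>v. c $ inv \<beta> v - d $ inv \<beta> v) v *s v) = 0"
      by (simp add: sum.reindex[OF b(1)] inv_f_f[OF b(1)])
    moreover have "\<forall>e. (\<Sum>v\<in>range \<beta>. e v *s v) = 0 \<longrightarrow> (\<forall>v\<in>range \<beta>. e v = 0)"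
      using b(2) unfolding vec.independent_explicit by blast
    ultimately have "\<forall>v\<in>range \<beta>. c $ inv \<beta> v - d $ inv \<beta> v = 0"
      using spec[of _ "\<lambda>v. c $ inv \<beta> v - d $ inv \<beta> v"] by blast
    then have "\<forall>i. c $ i - d $ i = 0" by (metis inv_f_f[OF b(1)] rangeI)
    then show "c = d" by (simp add: vec_eq_iff)
  qed
  have gsurj: "surj g" using finite_UNIV_inj_surj[OF _ ginj] by simp
  have key: "dotp (g c) u = dotp c (m u)" for c u
  proof -
    have "dotp (g c) u = (\<Sum>j\<in>UNIV. (\<Sum>i\<in>UNIV. c$i * \<beta> i $ j) * u$j)"
      by (simp add: g_def dotp_def sum_component)
    also have "\<dots> = (\<Sum>j\<in>UNIV. \<Sum>i\<in>UNIV. c$i * (\<beta> i $ j * u$j))"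
      by (simp add: sum_distrib_right mult.assoc)
    also have "\<dots> = (\<Sum>i\<in>UNIV. \<Sum>j\<in>UNIV. c$i * (\<beta> i $ j * u$j))"
      by (rule sum.swap)
    also have "\<dots> = dotp c (m u)"
      by (simp add: m_def dotp_def sum_distrib_left)
    finally show ?thesis .
  qed
  have minj: "inj m"
  proof (rule injI)
    fix u u' assume eq: "m u = m u'"
    have "\<forall>c. dotp (g c) (u - u') = 0"
      using eq by (simp add: dotp_diff_right key)
    have "\<forall>w. dotp w (u - u') = 0"
    proof
      fix w obtain c where "w = g c" using gsurj by (metis surjD)
      then show "dotp w (u - u') = 0" using \<open>\<forall>c. dotp (g c) (u - u') = 0\<close> by simp
    qed
    then have "\<forall>j. (u - u') $ j = 0" by (simp add: dotp_axis[symmetric])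
    then show "u = u'" by (simp add: vec_eq_iff)
  qed
  have msurj: "surj m" using finite_UNIV_inj_surj[OF _ minj] by simp
  have "perp V = m -` zpat I"
  proof -
    have "u \<in> perp V \<longleftrightarrow> (\<forall>i\<in>I. dotp (\<beta> i) u = 0)" for u
    proof
      assume "u \<in> perp V"
      then show "\<forall>i\<in>I. dotp (\<beta> i) u = 0"
        using b(4) vec.span_superset[of "\<beta> ` I"] by (auto simp: perp_def)
    next
      assume h: "\<forall>i\<in>I. dotp (\<beta> i) u = 0"
      have "vec.span (\<beta> ` I) \<subseteq> {v. dotp v u = 0}"
        using h by (intro vec.span_minimal[OF _ subspace_dotp0]) auto
      then show "u \<in> perp V" using b(4) by (auto simp: perp_def)
    qed
    then show ?thesis by (auto simp: zpat_def m_def)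
  qed
  then have "card (perp V) = card (zpat I :: ('a^'n) set)"
    by (simp only:) (rule card_vimage_inj[OF minj], simp add: msurj)
  also have "\<dots> = CARD('a) ^ (CARD('n) - card I)" by (rule card_zpat)
  finally show ?thesis unfolding b(3) .
qed



abbreviation QQ :: "'a::{field,finite} itself \<Rightarrow> nat" where "QQ _ \<equiv> CARD('a)"

lemma dim_from_card:
  fixes V :: "('a::{field,finite} ^ 'n::finite) set"
  assumes "vec.subspace V" "card V = CARD('a) ^ k"
  shows "vec.dim V = k"
proof -
  have "CARD('a) ^ vec.dim V = CARD('a) ^ k" using card_subspace[OF assms(1)] assms(2) by simp
  then show ?thesis using power_inject_exp[OF card_gt1[where 'a='a]] by blast
qed

lemma dim_perp:
  fixes V :: "('a::{field,finite} ^ 'n::finite) set"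
  assumes "vec.subspace V"
  shows "vec.dim (perp V) = CARD('n) - vec.dim V"
  by (rule dim_from_card[OF subspace_perp perp_card[OF assms]])

lemma perp_anti: "A \<subseteq> B \<Longrightarrow> perp B \<subseteq> perp A"
  unfolding perp_def by blast

lemma sub_perp_perp: "V \<subseteq> perp (perp V)"
  unfolding perp_def by (auto simp: dotp_comm)

lemma perp_perp:
  fixes V :: "('a::{field,finite} ^ 'n::finite) set"
  assumes "vec.subspace V"
  shows "perp (perp V) = V"
proof -
  have k: "vec.dim V \<le> CARD('n)" by (rule dim_subset_UNIV_cart_gen)
  have "card (perp (perp V)) = CARD('a) ^ (CARD('n) - (CARD('n) - vec.dim V))"
    using perp_card[OF subspace_perp[of V]] dim_perp[OF assms] by simp
  also have "\<dots> = card V" using k card_subspace[OF assms] by simp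
  finally have "card V = card (perp (perp V))" by simp
  then show ?thesis using card_subset_eq[OF finite sub_perp_perp[of V]] by simp
qed

lemma subspace_eq_dim:
  fixes A :: "('a::field ^ 'n::finite) set"
  assumes "vec.subspace A" "vec.subspace B" "A \<subseteq> B" "vec.dim A = vec.dim B"
  shows "A = B"
  using vec.subspace_dim_equal[OF assms(1,2,3)] assms(4) by simp

lemma dim_psub:
  fixes A :: "('a::field ^ 'n::finite) set"
  assumes "vec.subspace A" "vec.subspace B" "A \<subseteq> B" "A \<noteq> B"
  shows "vec.dim A < vec.dim B"
proof -
  have "vec.dim A \<le> vec.dim B" using vec.dim_subset[OF assms(3)] .
  moreover have "vec.dim A \<noteq> vec.dim B" using subspace_eq_dim[OF assms(1-3)] assms(4) by blast
  ultimately show ?thesis by simp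
qed

lemma covered_card:
  fixes x :: "('a::{field,finite} ^ 'n::finite) set"
  assumes "covered x y"
  shows "card y = CARD('a) * card x"
proof -
  have "vec.subspace x" "vec.subspace y" "vec.dim y = Suc (vec.dim x)"
    using assms unfolding covered_def by auto
  then show ?thesis using card_subspace[of x] card_subspace[of y] by simp
qed

lemma dim_insert_notin:
  fixes x :: "('a::field ^ 'n::finite) set"
  assumes "vec.subspace x" "v \<notin> x"
  shows "vec.dim (vec.span (insert v x)) = vec.dim x + 1"
proof -
  have "v \<notin> vec.span x" using assms by (simp add: vec.span_eq_iff[THEN iffD2])
  then show ?thesis by (simp add: vec.dim_insert)
qed

lemma covered_intro:
  fixes x :: "('a::field ^ 'n::finite) set"
  assumes "vec.subspace x" "v \<notin> x"
  shows "covered x (vec.span (insert v x))"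
  unfolding covered_def using dim_insert_notin[OF assms] assms(1)
  by (auto intro: vec.span_base)

lemma covered_span:
  fixes x :: "('a::field ^ 'n::finite) set"
  assumes "covered x y" "v \<in> y" "v \<notin> x"
  shows "y = vec.span (insert v x)"
proof -
  have sx: "vec.subspace x" and sy: "vec.subspace y" and xy: "x \<subseteq> y" and d: "vec.dim x + 1 = vec.dim y"
    using assms(1) unfolding covered_def by auto
  have sub: "vec.span (insert v x) \<subseteq> y"
    using assms(2) xy sy by (intro vec.span_minimal) auto
  have "vec.dim (vec.span (insert v x)) = vec.dim y"
    using dim_insert_notin[OF sx assms(3)] d by simp
  then show ?thesis using subspace_eq_dim[OF vec.subspace_span sy sub] by simp
qed

lemma covered_ex:
  fixes x :: "('a::field ^ 'n::finite) set"
  assumes "covered x y"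
  obtains v where "v \<in> y" "v \<notin> x"
proof -
  have "x \<noteq> y" using assms unfolding covered_def by auto
  moreover have "x \<subseteq> y" using assms unfolding covered_def by auto
  ultimately show ?thesis using that by blast
qed

lemma upcount:
  fixes x :: "('a::{field,finite} ^ 'n::finite) set"
  assumes sx: "vec.subspace x" and sP: "vec.subspace P" and xP: "x \<subseteq> P"
  shows "card {y\<in>Lsp. covered x y \<and> y \<subseteq> P} * (card x * (CARD('a) - 1)) = card P - card x"
proof -
  define Y where "Y = {y\<in>Lsp. covered x y \<and> y \<subseteq> P}"
  have U: "P - x = (\<Union>y\<in>Y. y - x)"
  proof
    show "P - x \<subseteq> (\<Union>y\<in>Y. y - x)"
    proof
      fix v assume v: "v \<in> P - x"
      let ?y = "vec.span (insert v x)"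
      have "covered x ?y" using covered_intro[OF sx] v by simp
      moreover have "?y \<subseteq> P" using v xP sP by (intro vec.span_minimal) auto
      moreover have "?y \<in> Lsp" by (simp add: Lsp_def)
      moreover have "v \<in> ?y - x" using v by (auto intro: vec.span_base)
      ultimately show "v \<in> (\<Union>y\<in>Y. y - x)" unfolding Y_def by blast
    qed
  qed (auto simp: Y_def)
  have disj: "\<forall>y1\<in>Y. \<forall>y2\<in>Y. y1 \<noteq> y2 \<longrightarrow> (y1 - x) \<inter> (y2 - x) = {}"
  proof (intro ballI impI)
    fix y1 y2 assume y1: "y1 \<in> Y" and y2: "y2 \<in> Y" and ne: "y1 \<noteq> y2"
    show "(y1 - x) \<inter> (y2 - x) = {}"
    proof (rule ccontr)
      assume "(y1 - x) \<inter> (y2 - x) \<noteq> {}"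
      then obtain v where "v \<in> y1" "v \<in> y2" "v \<notin> x" by blast
      then have "y1 = vec.span (insert v x)" "y2 = vec.span (insert v x)"
        using covered_span y1 y2 unfolding Y_def by auto
      then show False using ne by simp
    qed
  qed
  have cy: "card (y - x) = card x * (CARD('a) - 1)" if "y \<in> Y" for y
  proof -
    have c: "covered x y" using that unfolding Y_def by simp
    then have "x \<subseteq> y" unfolding covered_def by simp
    then have "card (y - x) = card y - card x" by (simp add: card_Diff_subset)
    also have "\<dots> = CARD('a) * card x - card x" using covered_card[OF c] by simp
    finally show ?thesis by (simp add: algebra_simps diff_mult_distrib2)
  qed
  have "card P - card x = card (P - x)" using xP by (simp add: card_Diff_subset)
  also have "\<dots> = (\<Sum>y\<in>Y. card (y - x))"
    unfolding U by (rule card_UN_disjoint) (use disj in auto)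
  also have "\<dots> = (\<Sum>y\<in>Y. card x * (CARD('a) - 1))" using cy by simp
  also have "\<dots> = card Y * (card x * (CARD('a) - 1))" by simp
  finally show ?thesis unfolding Y_def by simp
qed



definition "decomp x0 x1 \<longleftrightarrow> vec.subspace x0 \<and> vec.subspace x1 \<and> x0 \<inter> x1 = {0} \<and> ssum x0 x1 = UNIV"

lemma subspace_ssum:
  fixes A :: "('a::field ^ 'n) set"
  shows "vec.subspace A \<Longrightarrow> vec.subspace B \<Longrightarrow> vec.subspace (ssum A B)"
  unfolding ssum_def by (rule vec.subspace_sums)

lemma proj0_unique:
  assumes d: "decomp x0 x1" and a: "a \<in> x0" "u - a \<in> x1" and b: "b \<in> x0" "u - b \<in> x1"
  shows "a = b"
proof -
  have s0: "vec.subspace x0" and s1: "vec.subspace x1" and i: "x0 \<inter> x1 = {0}"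
    using d unfolding decomp_def by auto
  have "a - b \<in> x0" using a b s0 by (simp add: vec.subspace_diff)
  moreover have "a - b = (u - b) - (u - a)" by simp
  then have "a - b \<in> x1" using a b s1 by (metis vec.subspace_diff)
  ultimately have "a - b \<in> {0}" using i by blast
  then show ?thesis by simp
qed

lemma proj0_prop:
  assumes d: "decomp x0 x1"
  shows "proj0 x0 x1 u \<in> x0 \<and> u - proj0 x0 x1 u \<in> x1"
proof -
  have "u \<in> ssum x0 x1" using d unfolding decomp_def by simp
  then obtain a b where ab: "u = a + b" "a \<in> x0" "b \<in> x1" unfolding ssum_def by blast
  have ex: "a \<in> x0 \<and> u - a \<in> x1" using ab by simp
  show ?thesis unfolding proj0_def
    by (rule theI[of _ a]) (use ex proj0_unique[OF d] in blast)+
qed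

lemma proj0_eq:
  assumes d: "decomp x0 x1" and "a \<in> x0" "u - a \<in> x1"
  shows "proj0 x0 x1 u = a"
  using proj0_unique[OF d _ _ assms(2,3)] proj0_prop[OF d, of u] by blast

lemma coset_eq:
  fixes W :: "('a::field ^ 'n) set"
  assumes "vec.subspace W"
  shows "coset u W = coset v W \<longleftrightarrow> u - v \<in> W"
proof
  assume h: "coset u W = coset v W"
  have "u \<in> coset u W" unfolding coset_def using vec.subspace_0[OF assms] by force
  then obtain w where "w \<in> W" "u = v + w" using h unfolding coset_def by auto
  then show "u - v \<in> W" by simp
next
  assume h: "u - v \<in> W"
  show "coset u W = coset v W"
  proof
    show "coset u W \<subseteq> coset v W"
    proof
      fix y assume "y \<in> coset u W"
      then obtain w where w: "w \<in> W" "y = u + w" unfolding coset_def by auto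
      then have "(u - v) + w \<in> W" using h assms by (simp add: vec.subspace_add)
      moreover have "y = v + ((u - v) + w)" using w by simp
      ultimately show "y \<in> coset v W" unfolding coset_def by blast
    qed
  next
    show "coset v W \<subseteq> coset u W"
    proof
      fix y assume "y \<in> coset v W"
      then obtain w where w: "w \<in> W" "y = v + w" unfolding coset_def by auto
      then have "w - (u - v) \<in> W" using h assms by (simp add: vec.subspace_diff)
      moreover have "y = u + (w - (u - v))" using w by simp
      ultimately show "y \<in> coset u W" unfolding coset_def by blast
    qed
  qed
qed

lemma coset_diff:
  fixes W :: "('a::field ^ 'n) set"
  assumes "vec.subspace W"
  shows "{a - b | a b. a \<in> coset p W \<and> b \<in> coset r W} = coset (p - r) W"
proof
  show "{a - b | a b. a \<in> coset p W \<and> b \<in> coset r W} \<subseteq> coset (p - r) W"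
  proof
    fix y assume "y \<in> {a - b | a b. a \<in> coset p W \<and> b \<in> coset r W}"
    then obtain w1 w2 where w: "w1 \<in> W" "w2 \<in> W" "y = (p + w1) - (r + w2)"
      unfolding coset_def by blast
    then have "w1 - w2 \<in> W" using assms by (simp add: vec.subspace_diff)
    moreover have "y = (p - r) + (w1 - w2)" using w by simp
    ultimately show "y \<in> coset (p - r) W" unfolding coset_def by blast
  qed
next
  show "coset (p - r) W \<subseteq> {a - b | a b. a \<in> coset p W \<and> b \<in> coset r W}"
  proof
    fix y assume "y \<in> coset (p - r) W"
    then obtain w where w: "w \<in> W" "y = (p - r) + w" unfolding coset_def by auto
    have "p + w \<in> coset p W" using w unfolding coset_def by blast
    moreover have "r + 0 \<in> coset r W" using vec.subspace_0[OF assms] unfolding coset_def by blast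
    moreover have "y = (p + w) - (r + 0)" using w by simp
    ultimately show "y \<in> {a - b | a b. a \<in> coset p W \<and> b \<in> coset r W}" by blast
  qed
qed

lemma dif_char:
  fixes x z :: "('a::field ^ 'n) set"
  assumes d: "decomp x0 x1" and sx: "vec.subspace x" and sz: "vec.subspace z"
    and hs: "ssum z x0 = ssum x x0" and hi: "z \<inter> x0 = x \<inter> x0"
    and u0: "u0 \<in> x"
  shows "\<exists>ux vz. ux \<in> x \<and> vz \<in> z \<and> vz - ux \<in> x0 \<and> ux - u0 \<in> x0 \<and> vz - u0 \<in> x0 \<and>
     {a - b | a b. a \<in> tau x0 x1 z (coset u0 x0) \<and> b \<in> tau x0 x1 x (coset u0 x0)} = coset (vz - ux) (x \<inter> x0)"
proof -
  have s0: "vec.subspace x0" using d unfolding decomp_def by simp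
  let ?C = "coset u0 x0"
  define ux where "ux = (SOME u. u \<in> x \<and> coset u x0 = ?C)"
  define vz where "vz = (SOME u. u \<in> z \<and> coset u x0 = ?C)"
  have ux: "ux \<in> x \<and> coset ux x0 = ?C" unfolding ux_def by (rule someI[of _ u0]) (simp add: u0)
  have "u0 \<in> ssum x x0" using u0 vec.subspace_0[OF s0] unfolding ssum_def by force
  then have "u0 \<in> ssum z x0" using hs by simp
  then obtain v b where vb: "v \<in> z" "b \<in> x0" "u0 = v + b" unfolding ssum_def by blast
  have "coset v x0 = ?C" using coset_eq[OF s0] vb s0 by (simp add: vec.subspace_neg)
  then have "v \<in> z \<and> coset v x0 = ?C" using vb(1) by simp
  then have vz: "vz \<in> z \<and> coset vz x0 = ?C" unfolding vz_def by (rule someI[where P="\<lambda>u. u \<in> z \<and> coset u x0 = ?C"])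
  have e1: "ux - u0 \<in> x0" using ux coset_eq[OF s0] by blast
  have e2: "vz - u0 \<in> x0" using vz coset_eq[OF s0] by blast
  have e3: "vz - ux \<in> x0" using ux vz coset_eq[OF s0] by metis
  have sW: "vec.subspace (x \<inter> x0)" using sx s0 by (rule vec.subspace_inter)
  have t1: "tau x0 x1 x ?C = coset (proj0 x0 x1 ux) (x \<inter> x0)"
    unfolding tau_def ux_def ..
  have t2: "tau x0 x1 z ?C = coset (proj0 x0 x1 vz) (x \<inter> x0)"
    unfolding tau_def vz_def hi ..
  have pp: "proj0 x0 x1 vz = proj0 x0 x1 ux + (vz - ux)"
  proof (rule proj0_eq[OF d])
    show "proj0 x0 x1 ux + (vz - ux) \<in> x0"
      using proj0_prop[OF d, of ux] e3 s0 by (simp add: vec.subspace_add)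
    have "vz - (proj0 x0 x1 ux + (vz - ux)) = ux - proj0 x0 x1 ux" by simp
    then show "vz - (proj0 x0 x1 ux + (vz - ux)) \<in> x1" using proj0_prop[OF d, of ux] by simp
  qed
  have "{a - b | a b. a \<in> tau x0 x1 z ?C \<and> b \<in> tau x0 x1 x ?C} = coset (vz - ux) (x \<inter> x0)"
    unfolding t1 t2 coset_diff[OF sW] pp by simp
  then show ?thesis using ux vz e1 e2 e3 by blast
qed

lemma tau_rank:
  fixes x z :: "('a::field ^ 'n) set"
  assumes d: "decomp x0 x1" and sx: "vec.subspace x" and sz: "vec.subspace z"
    and hs: "ssum z x0 = ssum x x0" and hi: "z \<inter> x0 = x \<inter> x0"
  shows "tau_diff_rank x0 x1 z x = vec.dim (ssum x z \<inter> x0) - vec.dim (x \<inter> x0)"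
proof -
  have s0: "vec.subspace x0" using d unfolding decomp_def by simp
  have sW: "vec.subspace (x \<inter> x0)" using sx s0 by (rule vec.subspace_inter)
  let ?dom = "{coset u x0 | u. u \<in> x}"
  let ?dif = "\<lambda>C. {a - b | a b. a \<in> tau x0 x1 z C \<and> b \<in> tau x0 x1 x C}"
  have U: "\<Union> (?dif ` ?dom) = ssum x z \<inter> x0"
  proof
    show "\<Union> (?dif ` ?dom) \<subseteq> ssum x z \<inter> x0"
    proof
      fix y assume "y \<in> \<Union> (?dif ` ?dom)"
      then obtain u0 where u0: "u0 \<in> x" and y: "y \<in> ?dif (coset u0 x0)" by blast
      obtain ux vz where c: "ux \<in> x" "vz \<in> z" "vz - ux \<in> x0"
        "?dif (coset u0 x0) = coset (vz - ux) (x \<inter> x0)"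
        using dif_char[OF d sx sz hs hi u0] by blast
      obtain w where w: "w \<in> x \<inter> x0" "y = (vz - ux) + w" using y c(4) unfolding coset_def by auto
      have "y \<in> x0" using w c(3) s0 by (simp add: vec.subspace_add)
      moreover have "w - ux \<in> x" using w c(1) sx by (simp add: vec.subspace_diff)
      moreover have "y = (w - ux) + vz" using w by simp
      ultimately show "y \<in> ssum x z \<inter> x0" using c(2) unfolding ssum_def by blast
    qed
  next
    show "ssum x z \<inter> x0 \<subseteq> \<Union> (?dif ` ?dom)"
    proof
      fix t assume t: "t \<in> ssum x z \<inter> x0"
      then obtain a b where ab: "a \<in> x" "b \<in> z" "t = a + b" "t \<in> x0" unfolding ssum_def by blast
      have ma: "- a \<in> x" using ab sx by (simp add: vec.subspace_neg)
      obtain ux vz where c: "ux \<in> x" "vz \<in> z" "vz - ux \<in> x0" "ux - - a \<in> x0" "vz - - a \<in> x0"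
        "?dif (coset (- a) x0) = coset (vz - ux) (x \<inter> x0)"
        using dif_char[OF d sx sz hs hi ma] by blast
      have w1: "b - vz \<in> x \<inter> x0"
      proof -
        have "b - vz \<in> z" using ab c sz by (simp add: vec.subspace_diff)
        moreover have "b - vz = t - (vz - - a)" using ab by simp
        then have "b - vz \<in> x0" using ab(4) c(5) s0 by (metis vec.subspace_diff)
        ultimately show ?thesis using hi by blast
      qed
      have w2: "ux - - a \<in> x \<inter> x0"
        using c(1,4) ma sx vec.subspace_diff[OF sx c(1) ma] by simp
      have "(b - vz) + (ux - - a) \<in> x \<inter> x0" by (rule vec.subspace_add[OF sW w1 w2])
      moreover have "t = (vz - ux) + ((b - vz) + (ux - - a))" using ab by simp
      ultimately have "t \<in> ?dif (coset (- a) x0)" using c(6) unfolding coset_def by blast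
      moreover have "coset (- a) x0 \<in> ?dom" using ma by blast
      ultimately show "t \<in> \<Union> (?dif ` ?dom)" by blast
    qed
  qed
  show ?thesis unfolding tau_diff_rank_def Let_def U ..
qed



lemma finite_Lsp: "finite (Lsp :: ('a::{field,finite} ^ 'n::finite) set set)"
  by (rule finite_subset[of _ UNIV]) simp_all

lemma sum_ind2:
  assumes "finite A"
  shows "(\<Sum>y\<in>A. (if P y then (1::complex) else 0) * (if Q y then 1 else 0)) = of_nat (card {y\<in>A. P y \<and> Q y})"
proof -
  have "(\<Sum>y\<in>A. (if P y then (1::complex) else 0) * (if Q y then 1 else 0)) = (\<Sum>y\<in>A. if P y \<and> Q y then 1 else 0)"
    by (rule sum.cong) auto
  also have "\<dots> = of_nat (card (A \<inter> {y. P y \<and> Q y}))"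
    using assms by (simp add: sum.If_cases)
  also have "A \<inter> {y. P y \<and> Q y} = {y\<in>A. P y \<and> Q y}" by blast
  finally show ?thesis .
qed

lemma ssum_sub: "vec.subspace C \<Longrightarrow> A \<subseteq> C \<Longrightarrow> B \<subseteq> C \<Longrightarrow> ssum A B \<subseteq> C"
  unfolding ssum_def by (auto intro: vec.subspace_add)

lemma ssum_left: "vec.subspace B \<Longrightarrow> A \<subseteq> ssum A B"
  unfolding ssum_def using vec.subspace_0 by force

lemma ssum_right: "vec.subspace A \<Longrightarrow> B \<subseteq> ssum A B"
  unfolding ssum_def using vec.subspace_0 by force

lemma ssum_self: "vec.subspace A \<Longrightarrow> ssum A A = A"
  using ssum_sub[of A A A] ssum_left[of A A] by auto

lemma dim_ssum:
  fixes A :: "('a::field ^ 'n::finite) set"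
  shows "vec.subspace A \<Longrightarrow> vec.subspace B \<Longrightarrow> vec.dim (ssum A B) + vec.dim (A \<inter> B) = vec.dim A + vec.dim B"
  unfolding ssum_def by (rule vec.dim_sums_Int)

lemma upcount_real:
  fixes x :: "('a::{field,finite} ^ 'n::finite) set"
  assumes sx: "vec.subspace x" and sP: "vec.subspace P" and xP: "x \<subseteq> P"
  shows "real (card {y\<in>Lsp. covered x y \<and> y \<subseteq> P}) * (real CARD('a) ^ vec.dim x * (real CARD('a) - 1))
     = real CARD('a) ^ vec.dim P - real CARD('a) ^ vec.dim x"
proof -
  have le: "card x \<le> card P" using xP by (simp add: card_mono)
  have q1: "1 \<le> CARD('a)" using card_gt1[where 'a='a] by simp
  have "real (card {y\<in>Lsp. covered x y \<and> y \<subseteq> P} * (card x * (CARD('a) - 1))) = real (card P - card x)"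
    using upcount[OF assms] by simp
  then show ?thesis using le q1 card_subspace[OF sx] card_subspace[OF sP] by (simp add: of_nat_diff)
qed

lemma Aset_eq:
  fixes x :: "('a::{field,finite} ^ 'n::finite) set"
  assumes sx: "vec.subspace x" and s0: "vec.subspace x0"
  shows "{y\<in>Lsp. covered x y \<and> y \<inter> x0 = x \<inter> x0} =
     {y\<in>Lsp. covered x y \<and> y \<subseteq> UNIV} - {y\<in>Lsp. covered x y \<and> y \<subseteq> ssum x x0}"
proof -
  have sS: "vec.subspace (ssum x x0)" by (rule subspace_ssum[OF sx s0])
  have key: "y \<inter> x0 = x \<inter> x0 \<longleftrightarrow> \<not> y \<subseteq> ssum x x0" if c: "covered x y" for y
  proof
    assume h: "y \<inter> x0 = x \<inter> x0"
    show "\<not> y \<subseteq> ssum x x0"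
    proof
      assume yS: "y \<subseteq> ssum x x0"
      obtain v where v: "v \<in> y" "v \<notin> x" using covered_ex[OF c] by blast
      obtain a b where ab: "a \<in> x" "b \<in> x0" "v = a + b" using v yS unfolding ssum_def by blast
      have sy: "vec.subspace y" and xy: "x \<subseteq> y" using c unfolding covered_def by auto
      have "b = v - a" using ab by simp
      then have "b \<in> y" using v ab xy sy by (metis subsetD vec.subspace_diff)
      then have "b \<in> x" using h ab by blast
      then have "v \<in> x" using ab sx by (simp add: vec.subspace_add)
      then show False using v by simp
    qed
  next
    assume h: "\<not> y \<subseteq> ssum x x0"
    show "y \<inter> x0 = x \<inter> x0"
    proof (rule ccontr)
      assume "y \<inter> x0 \<noteq> x \<inter> x0"
      moreover have "x \<inter> x0 \<subseteq> y \<inter> x0" using c unfolding covered_def by auto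
      ultimately obtain b where b: "b \<in> y" "b \<in> x0" "b \<notin> x" by blast
      have "y = vec.span (insert b x)" by (rule covered_span[OF c b(1,3)])
      also have "\<dots> \<subseteq> ssum x x0"
        using b(2) ssum_left[OF s0, of x] ssum_right[OF sx, of x0] sS
        by (intro vec.span_minimal) auto
      finally show False using h by simp
    qed
  qed
  show ?thesis using key by auto
qed

lemma Bset_card:
  fixes x :: "('a::{field,finite} ^ 'n::finite) set"
  assumes sx: "vec.subspace x" and s0: "vec.subspace x0"
  shows "card {y\<in>Lsp. covered y x \<and> y \<inter> x0 = x \<inter> x0} =
     card {G\<in>Lsp. covered (perp x) G \<and> G \<subseteq> perp (x \<inter> x0)}"
proof -
  let ?W = "x \<inter> x0"
  have sW: "vec.subspace ?W" using sx s0 by (rule vec.subspace_inter)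
  let ?B = "{y\<in>Lsp. covered y x \<and> y \<inter> x0 = x \<inter> x0}"
  let ?Y = "{G\<in>Lsp. covered (perp x) G \<and> G \<subseteq> perp ?W}"
  have n: "vec.dim x \<le> CARD('n)" by (rule dim_subset_UNIV_cart_gen)
  have inj: "inj_on perp ?B"
    by (rule inj_onI) (metis (no_types, lifting) Lsp_def mem_Collect_eq perp_perp)
  have img: "perp ` ?B = ?Y"
  proof
    show "perp ` ?B \<subseteq> ?Y"
    proof
      fix G assume "G \<in> perp ` ?B"
      then obtain y where y: "y \<in> ?B" "G = perp y" by blast
      have sy: "vec.subspace y" and yx: "y \<subseteq> x" and d: "vec.dim y + 1 = vec.dim x"
        using y(1) unfolding covered_def by auto
      have "covered (perp x) G"
        unfolding covered_def y(2)
        using subspace_perp perp_anti[OF yx] dim_perp[OF sx] dim_perp[OF sy] d n by auto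
      moreover have "?W \<subseteq> y" using y(1) by blast
      then have "G \<subseteq> perp ?W" using perp_anti y(2) by blast
      ultimately show "G \<in> ?Y" using subspace_perp[of y] y(2) by (auto simp: Lsp_def)
    qed
  next
    show "?Y \<subseteq> perp ` ?B"
    proof
      fix G assume G: "G \<in> ?Y"
      have sG: "vec.subspace G" and xG: "perp x \<subseteq> G" and d: "vec.dim (perp x) + 1 = vec.dim G"
        and GW: "G \<subseteq> perp ?W"
        using G unfolding covered_def by auto
      have nG: "vec.dim G \<le> CARD('n)" by (rule dim_subset_UNIV_cart_gen)
      let ?y = "perp G"
      have e: "G = perp ?y" using perp_perp[OF sG] by simp
      have yx: "?y \<subseteq> x" using perp_anti[OF xG] perp_perp[OF sx] by simp
      have dy: "vec.dim ?y + 1 = vec.dim x"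
        using dim_perp[OF sG] dim_perp[OF sx] d n nG by simp
      have "covered ?y x" unfolding covered_def using subspace_perp sx yx dy by auto
      moreover have "?W \<subseteq> ?y" using perp_anti[OF GW] perp_perp[OF sW] by simp
      then have "?y \<inter> x0 = x \<inter> x0" using yx by blast
      ultimately have "?y \<in> ?B" using subspace_perp by (auto simp: Lsp_def)
      then show "G \<in> perp ` ?B" using e by blast
    qed
  qed
  show ?thesis using card_image[OF inj] img by simp
qed



lemma set2_char:
  fixes x z :: "('a::{field,finite} ^ 'n::finite) set"
  assumes sx: "vec.subspace x" and sz: "vec.subspace z" and s0: "vec.subspace x0" and ne: "z \<noteq> x"
  shows "{y\<in>Lsp. (covered y x \<and> y \<inter> x0 = x \<inter> x0) \<and> (covered y z \<and> z \<inter> x0 = y \<inter> x0)} =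
    (if vec.dim (x \<inter> z) + 1 = vec.dim x \<and> vec.dim (x \<inter> z) + 1 = vec.dim z \<and> z \<inter> x0 = x \<inter> x0
     then {x \<inter> z} else {})" (is "?L = ?R")
proof -
  have sxz: "vec.subspace (x \<inter> z)" using sx sz by (rule vec.subspace_inter)
  have yeq: "y = x \<inter> z" if y: "y \<in> ?L" for y
  proof -
    have sy: "vec.subspace y" and yx: "y \<subseteq> x" and yz: "y \<subseteq> z"
      and d1: "vec.dim y + 1 = vec.dim x" and d2: "vec.dim y + 1 = vec.dim z"
      using y unfolding covered_def by auto
    have "x \<inter> z \<noteq> x"
    proof
      assume "x \<inter> z = x"
      then have "x \<subseteq> z" by blast
      then have "x = z" using subspace_eq_dim[OF sx sz] d1 d2 by simp
      then show False using ne by simp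
    qed
    then have "vec.dim (x \<inter> z) < vec.dim x" using dim_psub[OF sxz sx] by blast
    moreover have "vec.dim y \<le> vec.dim (x \<inter> z)" using yx yz by (intro vec.dim_subset) blast
    ultimately have "vec.dim y = vec.dim (x \<inter> z)" using d1 by simp
    then show ?thesis using subspace_eq_dim[OF sy sxz] yx yz by blast
  qed
  show ?thesis
  proof (cases "vec.dim (x \<inter> z) + 1 = vec.dim x \<and> vec.dim (x \<inter> z) + 1 = vec.dim z \<and> z \<inter> x0 = x \<inter> x0")
    case True
    have c1: "covered (x \<inter> z) x" unfolding covered_def using sxz sx True by simp
    have c2: "covered (x \<inter> z) z" unfolding covered_def using sxz sz True by simp
    have e1: "(x \<inter> z) \<inter> x0 = x \<inter> x0" using True by blast
    have e2: "z \<inter> x0 = (x \<inter> z) \<inter> x0" using True by blast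
    have mem: "x \<inter> z \<in> ?L" using c1 c2 e1 e2 sxz by (simp add: Lsp_def)
    have "?L = {x \<inter> z}"
    proof
      show "?L \<subseteq> {x \<inter> z}" using yeq by blast
      show "{x \<inter> z} \<subseteq> ?L" using mem by blast
    qed
    then show ?thesis by (simp only: if_P[OF True])
  next
    case False
    have "?L = {}"
    proof (rule ccontr)
      assume "?L \<noteq> {}"
      then obtain y where y: "y \<in> ?L" by blast
      then have "y = x \<inter> z" by (rule yeq)
      then have "x \<inter> z \<in> ?L" using y by simp
      then have "vec.dim (x \<inter> z) + 1 = vec.dim x \<and> vec.dim (x \<inter> z) + 1 = vec.dim z \<and> z \<inter> x0 = x \<inter> x0"
        unfolding covered_def by auto
      then show False using False by simp
    qed
    then show ?thesis by (simp only: if_not_P[OF False])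
  qed
qed

lemma set1_char:
  fixes x z :: "('a::{field,finite} ^ 'n::finite) set"
  assumes sx: "vec.subspace x" and sz: "vec.subspace z" and s0: "vec.subspace x0" and ne: "z \<noteq> x"
  shows "{y\<in>Lsp. (covered x y \<and> y \<inter> x0 = x \<inter> x0) \<and> (covered z y \<and> z \<inter> x0 = y \<inter> x0)} =
    (if vec.dim (ssum x z) = vec.dim x + 1 \<and> vec.dim (ssum x z) = vec.dim z + 1 \<and> z \<inter> x0 = x \<inter> x0
        \<and> ssum x z \<inter> x0 = x \<inter> x0
     then {ssum x z} else {})" (is "?L = ?R")
proof -
  have sxz: "vec.subspace (ssum x z)" using sx sz by (rule subspace_ssum)
  have xin: "x \<subseteq> ssum x z" by (rule ssum_left[OF sz])
  have zin: "z \<subseteq> ssum x z" by (rule ssum_right[OF sx])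
  have yeq: "y = ssum x z" if y: "y \<in> ?L" for y
  proof -
    have sy: "vec.subspace y" and yx: "x \<subseteq> y" and yz: "z \<subseteq> y"
      and d1: "vec.dim x + 1 = vec.dim y" and d2: "vec.dim z + 1 = vec.dim y"
      using y unfolding covered_def by auto
    have sub: "ssum x z \<subseteq> y" using ssum_sub[OF sy yx yz] .
    have "x \<noteq> ssum x z"
    proof
      assume "x = ssum x z"
      then have "z \<subseteq> x" using zin by simp
      then have "z = x" using subspace_eq_dim[OF sz sx] d1 d2 by simp
      then show False using ne by simp
    qed
    then have "vec.dim x < vec.dim (ssum x z)" using dim_psub[OF sx sxz xin] by blast
    moreover have "vec.dim (ssum x z) \<le> vec.dim y" using sub by (rule vec.dim_subset)
    ultimately have "vec.dim (ssum x z) = vec.dim y" using d1 by simp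
    then show ?thesis using subspace_eq_dim[OF sxz sy sub] by simp
  qed
  let ?C = "vec.dim (ssum x z) = vec.dim x + 1 \<and> vec.dim (ssum x z) = vec.dim z + 1 \<and> z \<inter> x0 = x \<inter> x0
        \<and> ssum x z \<inter> x0 = x \<inter> x0"
  show ?thesis
  proof (cases ?C)
    case True
    have c1: "covered x (ssum x z)" unfolding covered_def using sxz sx True xin by simp
    have c2: "covered z (ssum x z)" unfolding covered_def using sxz sz True zin by simp
    have e1: "ssum x z \<inter> x0 = x \<inter> x0" using True by blast
    have e2: "z \<inter> x0 = ssum x z \<inter> x0" using True by blast
    have mem: "ssum x z \<in> ?L" using c1 c2 e1 e2 sxz by (simp add: Lsp_def)
    have "?L = {ssum x z}"
    proof
      show "?L \<subseteq> {ssum x z}" using yeq by blast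
      show "{ssum x z} \<subseteq> ?L" using mem by blast
    qed
    then show ?thesis by (simp only: if_P[OF True])
  next
    case False
    have "?L = {}"
    proof (rule ccontr)
      assume "?L \<noteq> {}"
      then obtain y where y: "y \<in> ?L" by blast
      then have "y = ssum x z" by (rule yeq)
      then have "ssum x z \<in> ?L" using y by simp
      then have ?C unfolding covered_def by auto
      then show False using False by simp
    qed
    then show ?thesis by (simp only: if_not_P[OF False])
  qed
qed



lemma d3_char:
  fixes x z :: "('a::{field,finite} ^ 'n::finite) set"
  assumes d: "decomp x0 x1" and sx: "vec.subspace x" and sz: "vec.subspace z"
  shows "(vec.subspace z \<and> ssum z x0 = ssum x x0 \<and> z \<inter> x0 = x \<inter> x0 \<and> tau_diff_rank x0 x1 z x = 1)
     \<longleftrightarrow> (vec.dim (x \<inter> z) + 1 = vec.dim x \<and> vec.dim (x \<inter> z) + 1 = vec.dim z \<and> z \<inter> x0 = x \<inter> x0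
          \<and> ssum x z \<inter> x0 \<noteq> x \<inter> x0)"
proof -
  have s0: "vec.subspace x0" using d unfolding decomp_def by simp
  define S where "S = ssum x x0"
  define U where "U = ssum (ssum x z) x0"
  define T where "T = ssum x z \<inter> x0"
  define W where "W = x \<inter> x0"
  have sS: "vec.subspace S" unfolding S_def using sx s0 by (rule subspace_ssum)
  have sxz: "vec.subspace (ssum x z)" using sx sz by (rule subspace_ssum)
  have sU: "vec.subspace U" unfolding U_def using sxz s0 by (rule subspace_ssum)
  have sT: "vec.subspace T" unfolding T_def using sxz s0 by (rule vec.subspace_inter)
  have sW: "vec.subspace W" unfolding W_def using sx s0 by (rule vec.subspace_inter)
  have sz0: "vec.subspace (ssum z x0)" using sz s0 by (rule subspace_ssum)
  have h1: "vec.dim S + vec.dim W = vec.dim x + vec.dim x0" unfolding S_def W_def by (rule dim_ssum[OF sx s0])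
  have h2: "vec.dim (ssum x z) + vec.dim (x \<inter> z) = vec.dim x + vec.dim z" by (rule dim_ssum[OF sx sz])
  have h3: "vec.dim (ssum z x0) + vec.dim (z \<inter> x0) = vec.dim z + vec.dim x0" by (rule dim_ssum[OF sz s0])
  have h4: "vec.dim U + vec.dim T = vec.dim (ssum x z) + vec.dim x0" unfolding U_def T_def by (rule dim_ssum[OF sxz s0])
  have xU: "ssum x z \<subseteq> U" unfolding U_def by (rule ssum_left[OF s0])
  have x0U: "x0 \<subseteq> U" unfolding U_def by (rule ssum_right[OF sxz])
  have xxz: "x \<subseteq> ssum x z" by (rule ssum_left[OF sz])
  have zxz: "z \<subseteq> ssum x z" by (rule ssum_right[OF sx])
  have SU: "S \<subseteq> U" unfolding S_def using ssum_sub[OF sU _ x0U] xU xxz by blast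
  have WT: "W \<subseteq> T" unfolding W_def T_def using xxz by blast
  show ?thesis
  proof
    assume h: "vec.subspace z \<and> ssum z x0 = ssum x x0 \<and> z \<inter> x0 = x \<inter> x0 \<and> tau_diff_rank x0 x1 z x = 1"
    have r: "vec.dim T - vec.dim W = 1" using tau_rank[OF d sx sz] h unfolding T_def W_def by simp
    have zS: "ssum z x0 = S" "z \<inter> x0 = W" using h unfolding S_def W_def by auto
    have dz: "vec.dim z = vec.dim x" using h1 h3 zS by simp
    have zsS: "z \<subseteq> S" using ssum_left[OF s0, of z] zS(1) by simp
    have xsS: "x \<subseteq> S" unfolding S_def by (rule ssum_left[OF s0])
    have x0S: "x0 \<subseteq> S" unfolding S_def by (rule ssum_right[OF sx])
    have "ssum x z \<subseteq> S" by (rule ssum_sub[OF sS xsS zsS])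
    then have "U \<subseteq> S" unfolding U_def by (rule ssum_sub[OF sS _ x0S])
    then have "U = S" using SU by blast
    then have "vec.dim (ssum x z) = vec.dim x + 1" using h1 h4 r by simp
    then have "vec.dim (x \<inter> z) + 1 = vec.dim x" using h2 dz by simp
    moreover have "T \<noteq> W" using r by auto
    ultimately show "vec.dim (x \<inter> z) + 1 = vec.dim x \<and> vec.dim (x \<inter> z) + 1 = vec.dim z \<and> z \<inter> x0 = x \<inter> x0
          \<and> ssum x z \<inter> x0 \<noteq> x \<inter> x0" using dz zS unfolding T_def W_def by simp
  next
    assume h: "vec.dim (x \<inter> z) + 1 = vec.dim x \<and> vec.dim (x \<inter> z) + 1 = vec.dim z \<and> z \<inter> x0 = x \<inter> x0
          \<and> ssum x z \<inter> x0 \<noteq> x \<inter> x0"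
    have dz: "vec.dim z = vec.dim x" using h by simp
    have p: "vec.dim (ssum x z) = vec.dim x + 1" using h h2 by simp
    have "vec.dim W < vec.dim T" using dim_psub[OF sW sT WT] h unfolding T_def W_def by blast
    moreover have "vec.dim S \<le> vec.dim U" using SU by (rule vec.dim_subset)
    ultimately have t: "vec.dim T = vec.dim W + 1" and u: "vec.dim U = vec.dim S"
      using h1 h4 p by simp_all
    have US: "U = S" using subspace_eq_dim[OF sS sU SU] u by simp
    have zsub: "ssum z x0 \<subseteq> S" using ssum_sub[OF sU _ x0U] zxz xU US by blast
    have zi: "z \<inter> x0 = W" using h unfolding W_def by simp
    have "vec.dim (ssum z x0) = vec.dim S" using h1 h3 zi dz by simp
    then have zS: "ssum z x0 = S" using subspace_eq_dim[OF sz0 sS zsub] by simp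
    have "tau_diff_rank x0 x1 z x = 1"
      using tau_rank[OF d sx sz] zS zi t unfolding S_def T_def W_def by simp
    then show "vec.subspace z \<and> ssum z x0 = ssum x x0 \<and> z \<inter> x0 = x \<inter> x0 \<and> tau_diff_rank x0 x1 z x = 1"
      using sz zS zi unfolding S_def W_def by simp
  qed
qed

lemma offdiag_count:
  fixes x z :: "('a::{field,finite} ^ 'n::finite) set"
  assumes d: "decomp x0 x1" and sx: "vec.subspace x" and sz: "vec.subspace z" and ne: "z \<noteq> x"
  shows "card {y\<in>Lsp. (covered y x \<and> y \<inter> x0 = x \<inter> x0) \<and> (covered y z \<and> z \<inter> x0 = y \<inter> x0)} =
    card {y\<in>Lsp. (covered x y \<and> y \<inter> x0 = x \<inter> x0) \<and> (covered z y \<and> z \<inter> x0 = y \<inter> x0)} +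
    (if vec.subspace z \<and> ssum z x0 = ssum x x0 \<and> z \<inter> x0 = x \<inter> x0 \<and> tau_diff_rank x0 x1 z x = 1 then 1 else 0)"
proof -
  have s0: "vec.subspace x0" using d unfolding decomp_def by simp
  have h2: "vec.dim (ssum x z) + vec.dim (x \<inter> z) = vec.dim x + vec.dim z" by (rule dim_ssum[OF sx sz])
  let ?C2 = "vec.dim (x \<inter> z) + 1 = vec.dim x \<and> vec.dim (x \<inter> z) + 1 = vec.dim z \<and> z \<inter> x0 = x \<inter> x0"
  let ?C1 = "vec.dim (ssum x z) = vec.dim x + 1 \<and> vec.dim (ssum x z) = vec.dim z + 1 \<and> z \<inter> x0 = x \<inter> x0
        \<and> ssum x z \<inter> x0 = x \<inter> x0"
  have e1: "?C1 \<longleftrightarrow> ?C2 \<and> ssum x z \<inter> x0 = x \<inter> x0" using h2 by auto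
  show ?thesis
    unfolding set1_char[OF sx sz s0 ne] set2_char[OF sx sz s0 ne] d3_char[OF d sx sz] e1
    by simp
qed

lemma diag_real:
  fixes Q a b :: real and n k s w d0 :: nat
  assumes Q: "Q > 1" and FA: "a * (Q^k * (Q - 1)) = Q^n - Q^s"
    and FB: "b * (Q^(n-k) * (Q - 1)) = Q^(n-w) - Q^(n-k)"
    and h: "s + w = k + d0" "w \<le> k" "k \<le> n" and wd: "w \<le> d0"
  shows "(Q - 1) * (a - b) = Q^(n-k) - ((Q^k + Q^d0) / Q^w - 1)"
proof -
  have p1: "Q^n = Q^(n-k) * Q^k" using h power_add[of Q "n-k" k] by simp
  have "s = (d0-w) + k" using h wd by simp
  then have p2: "Q^s = Q^(d0-w) * Q^k" using power_add[of Q "d0-w" k] by simp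
  have "n - w = (k-w) + (n-k)" using h by simp
  then have p3: "Q^(n-w) = Q^(k-w) * Q^(n-k)" using power_add[of Q "k-w" "n-k"] by simp
  have p4: "Q^k = Q^(k-w) * Q^w" using h power_add[of Q "k-w" w] by simp
  have p5: "Q^d0 = Q^(d0-w) * Q^w" using wd power_add[of Q "d0-w" w] by simp
  have qk: "Q^k > 0" "Q^(n-k) > 0" "Q^w > 0" using Q by simp_all
  have A: "(Q - 1) * a = Q^(n-k) - Q^(d0-w)"
  proof -
    have "((Q - 1) * a) * Q^k = (Q^(n-k) - Q^(d0-w)) * Q^k"
      using FA p1 p2 by (simp add: algebra_simps)
    then show ?thesis using qk Q by simp
  qed
  have B: "(Q - 1) * b = Q^(k-w) - 1"
  proof -
    have "((Q - 1) * b) * Q^(n-k) = (Q^(k-w) - 1) * Q^(n-k)"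
      using FB p3 by (simp add: algebra_simps)
    then show ?thesis using qk Q by simp
  qed
  have C: "(Q^k + Q^d0) / Q^w = Q^(k-w) + Q^(d0-w)"
  proof -
    have "(Q^k + Q^d0) / Q^w = (Q^(k-w) + Q^(d0-w)) * Q^w / Q^w"
      unfolding p4 p5 by (simp add: algebra_simps)
    also have "\<dots> = Q^(k-w) + Q^(d0-w)" using qk Q by simp
    finally show ?thesis .
  qed
  show ?thesis unfolding C using A B by (simp add: algebra_simps)
qed



theorem mainTheorem15:
  fixes x0 x1 x z :: "('a::{field,finite} ^ 'n::finite) set"
  assumes "vec.subspace x0" and "vec.subspace x1"
    and "x0 \<inter> x1 = {0}" and "ssum x0 x1 = UNIV"
    and "x \<in> Lsp" and "z \<in> Lsp"
  shows "(complex_of_real (qF TYPE('a)) ^ 2 - 1) * (opcomp (L1 x0) (R1 x0) x z - opcomp (R1 x0) (L1 x0) x z)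
       = complex_of_real (qF TYPE('a)) ^ CARD('n) * opcomp (D1 x0) (D2 x0) x z
         - (complex_of_real (qF TYPE('a)) ^ 2 - 1) * D3 x0 x1 x z - D4 x0 x z"
proof -
  have d: "decomp x0 x1" unfolding decomp_def using assms(1-4) by simp
  have s0: "vec.subspace x0" by fact
  have sx: "vec.subspace x" using assms(5) by (simp add: Lsp_def)
  have sz: "vec.subspace z" using assms(6) by (simp add: Lsp_def)
  define Q where "Q = real CARD('a)"
  have Q1: "Q > 1" unfolding Q_def using card_gt1[where 'a='a] by simp
  have qF: "qF TYPE('a) = sqrt Q" unfolding qF_def Q_def ..
  have cq: "complex_of_real (qF TYPE('a)) ^ 2 = complex_of_real Q"
    unfolding qF using Q1 by (simp flip: of_real_power)
  have L: "opcomp (L1 x0) (R1 x0) x z = of_nat (card {y\<in>Lsp. (covered x y \<and> y \<inter> x0 = x \<inter> x0) \<and> (covered z y \<and> z \<inter> x0 = y \<inter> x0)})"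
    unfolding opcomp_def L1_def R1_def by (rule sum_ind2[OF finite_Lsp])
  have R: "opcomp (R1 x0) (L1 x0) x z = of_nat (card {y\<in>Lsp. (covered y x \<and> y \<inter> x0 = x \<inter> x0) \<and> (covered y z \<and> z \<inter> x0 = y \<inter> x0)})"
    unfolding opcomp_def L1_def R1_def by (rule sum_ind2[OF finite_Lsp])
  have DD: "opcomp (D1 x0) (D2 x0) x z = D2 x0 x x * D1 x0 x z"
  proof -
    have "opcomp (D1 x0) (D2 x0) x z = (\<Sum>y\<in>Lsp. if y = x then D2 x0 x x * D1 x0 x z else 0)"
      unfolding opcomp_def by (rule sum.cong) (auto simp: D2_def)
    also have "\<dots> = D2 x0 x x * D1 x0 x z" using assms(5) by simp
    finally show ?thesis .
  qed
  show ?thesis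
  proof (cases "z = x")
    case False
    have D1z: "D1 x0 x z = 0" using False by (simp add: D1_def)
    have D4z: "D4 x0 x z = 0" using False by (simp add: D4_def)
    note cnt = offdiag_count[OF d sx sz False]
    let ?c = "vec.subspace z \<and> ssum z x0 = ssum x x0 \<and> z \<inter> x0 = x \<inter> x0 \<and> tau_diff_rank x0 x1 z x = 1"
    have D3z: "D3 x0 x1 x z = (if ?c then 1 else 0)" unfolding D3_def by (rule refl)
    show ?thesis
    proof (cases ?c)
      case True
      show ?thesis
        unfolding L R DD D1z D4z D3z cnt if_P[OF True] by (simp add: algebra_simps)
    next
      case False
      show ?thesis
        unfolding L R DD D1z D4z D3z cnt if_not_P[OF False] by (simp add: algebra_simps)
    qed
  next
    case True
    then have zx: "z = x" .
    define k where "k = vec.dim x"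
    define d0 where "d0 = vec.dim x0"
    define w where "w = vec.dim (x \<inter> x0)"
    define s where "s = vec.dim (ssum x x0)"
    define n where "n = CARD('n)"
    have sW: "vec.subspace (x \<inter> x0)" using sx s0 by (rule vec.subspace_inter)
    have sS: "vec.subspace (ssum x x0)" using sx s0 by (rule subspace_ssum)
    have h1: "s + w = k + d0" unfolding s_def w_def k_def d0_def by (rule dim_ssum[OF sx s0])
    have kn: "k \<le> n" unfolding k_def n_def by (rule dim_subset_UNIV_cart_gen)
    have d0n: "d0 \<le> n" unfolding d0_def n_def by (rule dim_subset_UNIV_cart_gen)
    have wk: "w \<le> k" unfolding w_def k_def by (rule vec.dim_subset) blast
    have wd: "w \<le> d0" unfolding w_def d0_def by (rule vec.dim_subset) blast
    define Aset where "Aset = {y\<in>Lsp. covered x y \<and> y \<inter> x0 = x \<inter> x0}"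
    define Bset where "Bset = {y\<in>Lsp. covered y x \<and> y \<inter> x0 = x \<inter> x0}"
    have eA: "{y\<in>Lsp. (covered x y \<and> y \<inter> x0 = x \<inter> x0) \<and> (covered z y \<and> z \<inter> x0 = y \<inter> x0)} = Aset"
      unfolding zx Aset_def by blast
    have eB: "{y\<in>Lsp. (covered y x \<and> y \<inter> x0 = x \<inter> x0) \<and> (covered y z \<and> z \<inter> x0 = y \<inter> x0)} = Bset"
      unfolding zx Bset_def by blast
    have LA: "opcomp (L1 x0) (R1 x0) x z = of_nat (card Aset)"
      unfolding eA[symmetric] by (rule L)
    have RB: "opcomp (R1 x0) (L1 x0) x z = of_nat (card Bset)"
      unfolding eB[symmetric] by (rule R)
    define Y1 where "Y1 = {y\<in>Lsp. covered x y \<and> y \<subseteq> (UNIV :: ('a^'n) set)}"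
    define Y2 where "Y2 = {y\<in>Lsp. covered x y \<and> y \<subseteq> ssum x x0}"
    have Y21: "Y2 \<subseteq> Y1" unfolding Y1_def Y2_def by blast
    have Aeq: "Aset = Y1 - Y2" unfolding Aset_def Y1_def Y2_def by (rule Aset_eq[OF sx s0])
    have fY1: "finite Y1" unfolding Y1_def by (rule finite_subset[OF _ finite_Lsp]) blast
    have cA: "real (card Aset) = real (card Y1) - real (card Y2)"
      unfolding Aeq using card_Diff_subset[OF finite_subset[OF Y21 fY1] Y21] card_mono[OF fY1 Y21]
      by (simp add: of_nat_diff)
    have u1: "real (card Y1) * (Q ^ k * (Q - 1)) = Q ^ n - Q ^ k"
      using upcount_real[OF sx vec.subspace_UNIV subset_UNIV] unfolding Y1_def Q_def k_def n_def
      by (simp add: card_cart_basis)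
    have u2: "real (card Y2) * (Q ^ k * (Q - 1)) = Q ^ s - Q ^ k"
      using upcount_real[OF sx sS ssum_left[OF s0]] unfolding Y2_def Q_def k_def s_def by simp
    have FA: "real (card Aset) * (Q ^ k * (Q - 1)) = Q ^ n - Q ^ s"
      unfolding cA using u1 u2 by (simp add: algebra_simps)
    have Bc: "card Bset = card {G\<in>Lsp. covered (perp x) G \<and> G \<subseteq> perp (x \<inter> x0)}"
      unfolding Bset_def by (rule Bset_card[OF sx s0])
    have FB: "real (card Bset) * (Q ^ (n - k) * (Q - 1)) = Q ^ (n - w) - Q ^ (n - k)"
      using upcount_real[OF subspace_perp subspace_perp perp_anti[of "x \<inter> x0" x]]
      unfolding Bc[symmetric] Q_def dim_perp[OF sx] dim_perp[OF sW] k_def n_def w_def by simp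
    have main: "(Q - 1) * (real (card Aset) - real (card Bset)) = Q ^ (n - k) - ((Q ^ k + Q ^ d0) / Q ^ w - 1)"
      by (rule diag_real[OF Q1 FA FB h1 wk kn wd])
    have D3x: "D3 x0 x1 x z = 0"
      using tau_rank[OF d sx sx refl refl] unfolding zx D3_def by (simp add: ssum_self[OF sx])
    have D4x: "D4 x0 x z = complex_of_real ((Q ^ k + Q ^ d0) / Q ^ w - 1)"
      unfolding zx D4_def using card_subspace[OF sx] card_subspace[OF s0] card_subspace[OF sW]
      unfolding Q_def k_def d0_def w_def by simp
    define r where "r = sqrt Q"
    have r0: "r > 0" unfolding r_def using Q1 by simp
    have D12: "D2 x0 x x * D1 x0 x z = complex_of_real (r powr (real d0 - 2 * real w) *
        r powr (real (n - d0) - 2 * (real s - real d0)))"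
      unfolding zx D1_def D2_def qF r_def d0_def w_def s_def n_def by simp
    have pw: "r ^ n * (r powr (real d0 - 2 * real w) * r powr (real (n - d0) - 2 * (real s - real d0))) = Q ^ (n - k)"
    proof -
      have e: "real n + ((real d0 - 2 * real w) + (real (n - d0) - 2 * (real s - real d0))) = real (2 * (n - k))"
        using h1 kn d0n by (simp add: of_nat_diff)
      have "r ^ n * (r powr (real d0 - 2 * real w) * r powr (real (n - d0) - 2 * (real s - real d0)))
          = r powr (real n + ((real d0 - 2 * real w) + (real (n - d0) - 2 * (real s - real d0))))"
        by (simp only: powr_realpow[OF r0, symmetric] powr_add[symmetric])
      also have "\<dots> = r ^ (2 * (n - k))" unfolding e by (rule powr_realpow[OF r0])
      also have "\<dots> = Q ^ (n - k)" unfolding r_def power_mult using Q1 by simp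
      finally show ?thesis .
    qed
    have "(complex_of_real (qF TYPE('a)) ^ 2 - 1) * (opcomp (L1 x0) (R1 x0) x z - opcomp (R1 x0) (L1 x0) x z)
        = complex_of_real ((Q - 1) * (real (card Aset) - real (card Bset)))"
      unfolding cq LA RB by simp
    also have "\<dots> = complex_of_real (Q ^ (n - k) - ((Q ^ k + Q ^ d0) / Q ^ w - 1))"
      unfolding main ..
    also have "\<dots> = complex_of_real (qF TYPE('a)) ^ CARD('n) * opcomp (D1 x0) (D2 x0) x z
         - (complex_of_real (qF TYPE('a)) ^ 2 - 1) * D3 x0 x1 x z - D4 x0 x z"
      unfolding DD D12 D3x D4x qF r_def[symmetric] n_def[symmetric] pw[symmetric]
      by (simp flip: of_real_power of_real_mult)
    finally show ?thesis .
  qed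
qed


end
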